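(* Let $\mathcal{N}$ be a one-counter net. If Eve wins the one-token game $G_1$ on $\mathcal{N}$, then Eve has a winning strategy in the letter game on $\mathcal{N}$.
   Context: A one-counter net (OCN) is $\mathcal{N}=(Q,\Sigma,\Delta,q_0,F)$ with $Q$ finite, $\Sigma$ finite, $q_0\in Q$, $F\subseteq Q$, $\Delta\subseteq Q\times\Sigma\times\{-1,0,1\}\times Q$; configurations $(q,n)\in Q\times\mathbb{N}$, step $(q,n)\xrightarrow{a,d}(p,n+d)$ if $(q,a,d,p)\in\Delta$ and $n+d\ge0$; runs start at $(q_0,0)$ and are accepting if the last state is in $F$; $\mathcal{L}(\mathcal{N})$ is the set of words with an accepting run. Letter game: positions $(c,w)$, start $((q_0,0),\varepsilon)$; each round Adam picks $a\in\Sigma$, Eve picks a step $c\xrightarrow{a,d}c'$; if Eve has none and $wa$ is a prefix of a word of $\mathcal{L}(\mathcal{N})$ she loses; if $wa\in\mathcal{L}(\mathcal{N})$ but the state of $c'$ is not in $F$, Adam wins; otherwise continue from $(c',wa)$; Eve wins infinite plays. The game $G_1$ on $\mathcal{N}$: positions are pairs $(c^{E},c^{A})$ of configurations (Eve's token, Adam's token), starting at $((q_0,0),(q_0,0))$. Each round: Adam picks $a\in\Sigma$; Eve picks a step $c^E\xrightarrow{a,d}c^E_{+}$ for her token; Adam picks a step $c^A\xrightarrow{a,d'}c^A_{+}$ for his token. If Adam cannot move his token, he loses. If Eve cannot move her token while Adam can move his and extend his run to an accepting run, Eve loses. If both move and the state of $c^A_+$ is in $F$ but that of $c^E_+$ is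 not, Eve loses. Otherwise play continues from $(c^E_+,c^A_+)$; Eve wins infinite plays. *)

theory Defs
  imports Main
begin

text \<open>One-counter nets. Transitions carry a counter update d in {-1,0,1} (as an int);
configurations are pairs (state, counter value) with a natural-number counter.\<close>

record ('q, 'a) ocn =
  states :: "'q set"
  alph   :: "'a set"
  trans  :: "('q \<times> 'a \<times> int \<times> 'q) set"
  init   :: "'q"
  final  :: "'q set"

definition wf_ocn :: "('q, 'a) ocn \<Rightarrow> bool" where
  "wf_ocn N \<longleftrightarrow> finite (states N) \<and> finite (alph N) \<and> init N \<in> states N
     \<and> final N \<subseteq> states N
     \<and> trans N \<subseteq> states N \<times> alph N \<times> {-1, 0, 1} \<times> states N"

type_synonym 'q config = "'q \<times> nat"

definition step :: "('q, 'a) ocn \<Rightarrow> 'q config \<Rightarrow> 'a \<Rightarrow> 'q config \<Rightarrow> bool" where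
  "step N c a c' \<longleftrightarrow> (\<exists>d. (fst c, a, d, fst c') \<in> trans N \<and> int (snd c) + d \<ge> 0
                         \<and> int (snd c') = int (snd c) + d)"

inductive reach :: "('q, 'a) ocn \<Rightarrow> 'q config \<Rightarrow> 'a list \<Rightarrow> 'q config \<Rightarrow> bool"
  for N where
  reach_Nil: "reach N c [] c"
| reach_Cons: "step N c a c' \<Longrightarrow> reach N c' w c'' \<Longrightarrow> reach N c (a # w) c''"

definition init_config :: "('q, 'a) ocn \<Rightarrow> 'q config" where
  "init_config N = (init N, 0)"

definition lang :: "('q, 'a) ocn \<Rightarrow> 'a list set" where
  "lang N = {w. \<exists>c. reach N (init_config N) w c \<and> fst c \<in> final N}"

definition acc_ext :: "('q, 'a) ocn \<Rightarrow> 'q config \<Rightarrow> bool" where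
  "acc_ext N c \<longleftrightarrow> (\<exists>v c'. reach N c v c' \<and> fst c' \<in> final N)"

text \<open>A strategy for Eve in the letter game maps the word played so far (including
Adam's newest letter) to her new configuration; her own past moves are determined by
the letters and the strategy, so this is no loss of generality.\<close>

definition letter_cfg :: "('q, 'a) ocn \<Rightarrow> ('a list \<Rightarrow> 'q config) \<Rightarrow> 'a list \<Rightarrow> 'q config" where
  "letter_cfg N \<sigma> u = (if u = [] then init_config N else \<sigma> u)"

text \<open>Eve's strategy wins: along every sequence of Adam letters w which is still a
prefix of a word in the language, each of Eve's chosen moves is a legal step, and
whenever w is in the language, Eve's state is final.  (Once Adam leaves the set of
prefixes of the language, Eve can never lose.)\<close>

definition letter_winning :: "('q, 'a) ocn \<Rightarrow> ('a list \<Rightarrow> 'q config) \<Rightarrow> bool" where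
  "letter_winning N \<sigma> \<longleftrightarrow>
     (\<forall>w \<in> lists (alph N). (\<exists>v. w @ v \<in> lang N) \<longrightarrow>
        (\<forall>i < length w. step N (letter_cfg N \<sigma> (take i w)) (w ! i)
                              (letter_cfg N \<sigma> (take (Suc i) w)))
        \<and> (w \<in> lang N \<longrightarrow> fst (letter_cfg N \<sigma> w) \<in> final N))"

definition eve_wins_letter_game :: "('q, 'a) ocn \<Rightarrow> bool" where
  "eve_wins_letter_game N \<longleftrightarrow> (\<exists>\<sigma>. letter_winning N \<sigma>)"

text \<open>A strategy for Eve in G1 maps the letters a_1..a_k played so far (k >= 1, including
the newest letter) and Adam's token configurations c^A_0..c^A_(k-1) (before his k-th move)
to Eve's new configuration.\<close>

definition g1_eve_cfg :: "('q, 'a) ocn \<Rightarrow> ('a list \<Rightarrow> 'q config list \<Rightarrow> 'q config)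
     \<Rightarrow> 'a list \<Rightarrow> 'q config list \<Rightarrow> nat \<Rightarrow> 'q config" where
  "g1_eve_cfg N \<tau> w cs i = (if i = 0 then init_config N else \<tau> (take i w) (take i cs))"

text \<open>Eve's G1 strategy is winning: for every sequence of letters w and every legal
sequence cs of Adam-token configurations (a run on w from the initial configuration,
cs ! i being the configuration after i rounds), and every round i in which the play has
not ended before (Eve moved legally in all earlier rounds): if Eve's move is illegal
then Adam's new configuration cannot be extended to an accepting run; and if Eve moved
legally and Adam's new state is accepting, so is Eve's.\<close>

definition g1_winning :: "('q, 'a) ocn \<Rightarrow> ('a list \<Rightarrow> 'q config list \<Rightarrow> 'q config) \<Rightarrow> bool" where
  "g1_winning N \<tau> \<longleftrightarrow>
     (\<forall>w cs. w \<in> lists (alph N) \<and> length cs = Suc (length w) \<and> cs ! 0 = init_config N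
        \<and> (\<forall>i < length w. step N (cs ! i) (w ! i) (cs ! Suc i)) \<longrightarrow>
        (\<forall>i < length w.
           (\<forall>j < i. step N (g1_eve_cfg N \<tau> w cs j) (w ! j) (g1_eve_cfg N \<tau> w cs (Suc j))) \<longrightarrow>
             (\<not> step N (g1_eve_cfg N \<tau> w cs i) (w ! i) (g1_eve_cfg N \<tau> w cs (Suc i))
                  \<longrightarrow> \<not> acc_ext N (cs ! Suc i))
           \<and> (step N (g1_eve_cfg N \<tau> w cs i) (w ! i) (g1_eve_cfg N \<tau> w cs (Suc i))
                \<and> fst (cs ! Suc i) \<in> final N
                  \<longrightarrow> fst (g1_eve_cfg N \<tau> w cs (Suc i)) \<in> final N)))"

definition eve_wins_G1 :: "('q, 'a) ocn \<Rightarrow> bool" where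
  "eve_wins_G1 N \<longleftrightarrow> (\<exists>\<tau>. g1_winning N \<tau>)"

end

theory Submission
  imports Defs
begin

declare split_paired_Ex [simp del] split_paired_All [simp del]

coinductive dmn :: "('q, 'a) ocn \<Rightarrow> 'q config \<Rightarrow> 'q config \<Rightarrow> bool" for N where
  "(\<forall>a\<in>alph N. (\<exists>e'. step N e a e' \<and> (\<forall>x'. step N x a x' \<longrightarrow>
         (fst x' \<in> final N \<longrightarrow> fst e' \<in> final N) \<and> dmn N e' x'))
      \<or> (\<forall>x'. step N x a x' \<longrightarrow> \<not> acc_ext N x')) \<Longrightarrow> dmn N e x"

lemma reach_Nil_iff[simp]: "reach N c [] d \<longleftrightarrow> c = d"
  by (auto elim: reach.cases intro: reach.intros)

lemma reach_Cons_iff[simp]: "reach N c (a # w) d \<longleftrightarrow> (\<exists>c'. step N c a c' \<and> reach N c' w d)"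
  by (auto elim: reach.cases intro: reach.intros)

lemma dmn_D:
  assumes "dmn N e x" "a \<in> alph N"
  shows "(\<exists>e'. step N e a e' \<and> (\<forall>x'. step N x a x' \<longrightarrow>
         (fst x' \<in> final N \<longrightarrow> fst e' \<in> final N) \<and> dmn N e' x'))
      \<or> (\<forall>x'. step N x a x' \<longrightarrow> \<not> acc_ext N x')"
  using assms by (cases rule: dmn.cases) blast

lemma dmn_coind:
  assumes "X e x"
  and step: "\<And>e x a. X e x \<Longrightarrow> a \<in> alph N \<Longrightarrow> (\<exists>e'. step N e a e' \<and> (\<forall>x'. step N x a x' \<longrightarrow>
         (fst x' \<in> final N \<longrightarrow> fst e' \<in> final N) \<and> (X e' x' \<or> dmn N e' x')))
      \<or> (\<forall>x'. step N x a x' \<longrightarrow> \<not> acc_ext N x')"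
  shows "dmn N e x"
proof (rule dmn.coinduct[of X], rule assms(1))
  fix x1 x2 assume "X x1 x2"
  then have H: "\<forall>a\<in>alph N. (\<exists>e'. step N x1 a e' \<and> (\<forall>x'. step N x2 a x' \<longrightarrow>
         (fst x' \<in> final N \<longrightarrow> fst e' \<in> final N) \<and> (X e' x' \<or> dmn N e' x')))
      \<or> (\<forall>x'. step N x2 a x' \<longrightarrow> \<not> acc_ext N x')" using step by blast
  show "\<exists>e x. x1 = e \<and> x2 = x \<and> (\<forall>a\<in>alph N. (\<exists>e'. step N e a e' \<and> (\<forall>x'. step N x a x' \<longrightarrow>
         (fst x' \<in> final N \<longrightarrow> fst e' \<in> final N) \<and> (X e' x' \<or> dmn N e' x')))
      \<or> (\<forall>x'. step N x a x' \<longrightarrow> \<not> acc_ext N x'))"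
    by (rule exI[of _ x1], rule exI[of _ x2], rule conjI[OF refl], rule conjI[OF refl], rule H)
qed

lemma reach_snoc: "reach N c (u @ [a]) y \<longleftrightarrow> (\<exists>x. reach N c u x \<and> step N x a y)"
proof (induction u arbitrary: c)
  case Nil
  show ?case
    by simp
next
  case (Cons b u)
  show ?case
  proof
    assume "reach N c ((b # u) @ [a]) y"
    then obtain c' where "step N c b c'" "reach N c' (u @ [a]) y"
      by (auto elim: reach.cases)
    then show "\<exists>x. reach N c (b # u) x \<and> step N x a y"
      using Cons by (auto intro: reach.intros)
  next
    assume "\<exists>x. reach N c (b # u) x \<and> step N x a y"
    then obtain x c' where "step N c b c'" "reach N c' u x" "step N x a y"
      by (auto elim: reach.cases)
    then show "reach N c ((b # u) @ [a]) y"
      using Cons by (auto intro: reach.intros)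
  qed
qed

lemma reach_app: "reach N c (u @ v) d \<Longrightarrow> \<exists>m. reach N c u m \<and> reach N m v d"
proof (induction u arbitrary: c)
  case Nil
  then show ?case by simp
next
  case (Cons b u)
  then obtain c' where c': "step N c b c'" "reach N c' (u @ v) d"
    by auto
  then obtain m where "reach N c' u m" "reach N m v d" using Cons.IH by blast
  then show ?case using c'(1) by auto
qed

lemma step_alph: "wf_ocn N \<Longrightarrow> step N c a c' \<Longrightarrow> a \<in> alph N"
proof -
  assume wf: "wf_ocn N" and st: "step N c a c'"
  from st obtain d where "(fst c, a, d, fst c') \<in> trans N" unfolding step_def by blast
  moreover have "trans N \<subseteq> states N \<times> alph N \<times> {-1, 0, 1} \<times> states N"
    using wf unfolding wf_ocn_def by blast
  ultimately have "(fst c, a, d, fst c') \<in> states N \<times> alph N \<times> {-1, 0, 1} \<times> states N" by blast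
  then show ?thesis by (simp only: mem_Times_iff fst_conv snd_conv)
qed

lemma acc_ext_step: "step N c a c' \<Longrightarrow> acc_ext N c' \<Longrightarrow> acc_ext N c"
proof -
  assume st: "step N c a c'" and "acc_ext N c'"
  then obtain v d where "reach N c' v d" "fst d \<in> final N" unfolding acc_ext_def by blast
  then have "reach N c (a # v) d" "fst d \<in> final N" using reach.reach_Cons[OF st] by blast+
  then show "acc_ext N c" unfolding acc_ext_def by blast
qed

lemma dmn_dead: "\<not> acc_ext N y \<Longrightarrow> dmn N e y"
proof (rule dmn_coind[where X="\<lambda>e y. \<not> acc_ext N y"])
  fix e y a assume "\<not> acc_ext N y"
  then have "\<forall>x'. step N y a x' \<longrightarrow> \<not> acc_ext N x'" using acc_ext_step[of N y a] by blast
  then show "(\<exists>e'. step N e a e' \<and> (\<forall>x'. step N y a x' \<longrightarrow>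
         (fst x' \<in> final N \<longrightarrow> fst e' \<in> final N) \<and> (\<not> acc_ext N x' \<or> dmn N e' x')))
      \<or> (\<forall>x'. step N y a x' \<longrightarrow> \<not> acc_ext N x')" by (rule disjI2)
qed

lemma dmn_alive:
  assumes "wf_ocn N" "reach N y v c" "fst c \<in> final N"
  shows "dmn N x y \<Longrightarrow> (fst y \<in> final N \<longrightarrow> fst x \<in> final N) \<Longrightarrow> acc_ext N x"
  using assms(2,3)
proof (induction y v c arbitrary: x rule: reach.induct)
  case (reach_Nil y)
  then have "fst x \<in> final N" by blast
  then show ?case using reach.reach_Nil[of N x] unfolding acc_ext_def by blast
next
  case (reach_Cons y b y1 w c'')
  have b: "b \<in> alph N" using step_alph[OF assms(1) reach_Cons(1)] .
  from reach_Cons(4) b have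
    "(\<exists>e'. step N x b e' \<and> (\<forall>x'. step N y b x' \<longrightarrow>
         (fst x' \<in> final N \<longrightarrow> fst e' \<in> final N) \<and> dmn N e' x'))
      \<or> (\<forall>x'. step N y b x' \<longrightarrow> \<not> acc_ext N x')"
    by (rule dmn_D)
  then show ?case
  proof
    assume "\<exists>e'. step N x b e' \<and> (\<forall>x'. step N y b x' \<longrightarrow>
         (fst x' \<in> final N \<longrightarrow> fst e' \<in> final N) \<and> dmn N e' x')"
    then obtain e' where "step N x b e'" "dmn N e' y1" "fst y1 \<in> final N \<longrightarrow> fst e' \<in> final N"
      using reach_Cons(1) by blast
    then have "acc_ext N e'" using reach_Cons.IH[of e'] reach_Cons(6) by blast
    then show ?thesis using acc_ext_step[OF \<open>step N x b e'\<close>] by blast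
  next
    assume "\<forall>x'. step N y b x' \<longrightarrow> \<not> acc_ext N x'"
    then have "\<not> acc_ext N y1" using reach_Cons(1) by blast
    moreover have "acc_ext N y1" using reach_Cons(2,6) unfolding acc_ext_def by blast
    ultimately show ?thesis by blast
  qed
qed

lemma dmn_trans:
  assumes wf: "wf_ocn N" and d1: "dmn N e0 x0" and d2: "dmn N x0 y0"
  shows "dmn N e0 y0"
proof (rule dmn_coind[where X="\<lambda>e y. \<exists>x. dmn N e x \<and> dmn N x y"])
  show "\<exists>x. dmn N e0 x \<and> dmn N x y0" using d1 d2 by blast
next
    fix e y a assume "\<exists>x. dmn N e x \<and> dmn N x y" and a: "a \<in> alph N"
    then obtain x where dmn: "dmn N e x" "dmn N x y" by blast
    from dmn(2) a have Hx:
      "(\<exists>e'. step N x a e' \<and> (\<forall>x'. step N y a x' \<longrightarrow>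
         (fst x' \<in> final N \<longrightarrow> fst e' \<in> final N) \<and> dmn N e' x'))
      \<or> (\<forall>x'. step N y a x' \<longrightarrow> \<not> acc_ext N x')"
      by (rule dmn_D)
    from dmn(1) a have He:
      "(\<exists>e'. step N e a e' \<and> (\<forall>x'. step N x a x' \<longrightarrow>
         (fst x' \<in> final N \<longrightarrow> fst e' \<in> final N) \<and> dmn N e' x'))
      \<or> (\<forall>x'. step N x a x' \<longrightarrow> \<not> acc_ext N x')"
      by (rule dmn_D)
    show "(\<exists>e'. step N e a e' \<and> (\<forall>x'. step N y a x' \<longrightarrow>
         (fst x' \<in> final N \<longrightarrow> fst e' \<in> final N) \<and>
           ((\<exists>x. dmn N e' x \<and> dmn N x x') \<or> dmn N e' x')))
      \<or> (\<forall>x'. step N y a x' \<longrightarrow> \<not> acc_ext N x')"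
    proof (cases "\<forall>x'. step N y a x' \<longrightarrow> \<not> acc_ext N x'")
      case True then show ?thesis by blast
    next
      case False
      with Hx obtain x1 where x1: "step N x a x1" "\<forall>x'. step N y a x' \<longrightarrow>
         (fst x' \<in> final N \<longrightarrow> fst x1 \<in> final N) \<and> dmn N x1 x'" by blast
      from False obtain y1 where y1: "step N y a y1" "acc_ext N y1" by blast
      from y1(2) obtain v c where vc: "reach N y1 v c" "fst c \<in> final N"
        unfolding acc_ext_def by blast
      have "dmn N x1 y1" "fst y1 \<in> final N \<longrightarrow> fst x1 \<in> final N" using x1(2) y1(1) by blast+
      then have "acc_ext N x1"
        using dmn_alive[OF wf vc] by blast
      with He x1(1) obtain e1 where e1: "step N e a e1" "(fst x1 \<in> final N \<longrightarrow> fst e1 \<in> final N)"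
        "dmn N e1 x1" by blast
      show ?thesis
      proof (rule disjI1, rule exI[of _ e1], intro conjI allI impI)
        show "step N e a e1" by (rule e1(1))
      next
        fix x' assume "step N y a x'"
        then have "fst x' \<in> final N \<longrightarrow> fst x1 \<in> final N" "dmn N x1 x'" using x1(2) by blast+
        then show "fst x' \<in> final N \<Longrightarrow> fst e1 \<in> final N" using e1(2) by blast
        show "(\<exists>x. dmn N e1 x \<and> dmn N x x') \<or> dmn N e1 x'"
          using e1(3) \<open>dmn N x1 x'\<close> by blast
      qed
    qed
qed

definition g1pos :: "('q, 'a) ocn \<Rightarrow> ('a list \<Rightarrow> 'q config list \<Rightarrow> 'q config) \<Rightarrow> 'q config \<Rightarrow> 'q config \<Rightarrow> bool" where
  "g1pos N \<tau> e x \<longleftrightarrow> (\<exists>w cs. w \<in> lists (alph N) \<and> length cs = Suc (length w) \<and> cs ! 0 = init_config N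
        \<and> (\<forall>i < length w. step N (cs ! i) (w ! i) (cs ! Suc i))
        \<and> (\<forall>j < length w. step N (g1_eve_cfg N \<tau> w cs j) (w ! j) (g1_eve_cfg N \<tau> w cs (Suc j)))
        \<and> e = g1_eve_cfg N \<tau> w cs (length w) \<and> x = cs ! length w)"

lemma g1_eve_cfg_snoc:
  assumes "length cs = Suc (length w)" "j \<le> length w"
  shows "g1_eve_cfg N \<tau> (w @ [a]) (cs @ [x']) j = g1_eve_cfg N \<tau> w cs j"
  using assms unfolding g1_eve_cfg_def by auto

lemma g1pos_dmn:
  assumes "g1_winning N \<tau>" and g0: "g1pos N \<tau> e0 x0"
  shows "dmn N e0 x0"
proof (rule dmn_coind[where X="g1pos N \<tau>"])
  show "g1pos N \<tau> e0 x0" by (rule g0)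
next
  fix e x a assume "g1pos N \<tau> e x" and a: "a \<in> alph N"
  then obtain w cs where H: "w \<in> lists (alph N)" "length cs = Suc (length w)" "cs ! 0 = init_config N"
        "\<forall>i < length w. step N (cs ! i) (w ! i) (cs ! Suc i)"
        "\<forall>j < length w. step N (g1_eve_cfg N \<tau> w cs j) (w ! j) (g1_eve_cfg N \<tau> w cs (Suc j))"
        "e = g1_eve_cfg N \<tau> w cs (length w)" "x = cs ! length w"
    unfolding g1pos_def by blast
  let ?n = "length w"
    define e' where "e' = \<tau> (w @ [a]) cs"
    have E': "g1_eve_cfg N \<tau> (w @ [a]) (cs @ [x']) (Suc ?n) = e'" for x'
      using H(2) unfolding g1_eve_cfg_def e'_def by simp
    have G: "(\<not> step N e a e' \<longrightarrow> \<not> acc_ext N x')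
           \<and> (step N e a e' \<and> fst x' \<in> final N \<longrightarrow> fst e' \<in> final N)"
       and P: "step N e a e' \<longrightarrow> g1pos N \<tau> e' x'"
      if sx: "step N x a x'" for x'
    proof -
      let ?w = "w @ [a]" and ?cs = "cs @ [x']"
      have w1: "?w \<in> lists (alph N)" using H(1) a by auto
      have l1: "length ?cs = Suc (length ?w)" using H(2) by simp
      have c0: "?cs ! 0 = init_config N" using H(2,3) by (simp add: nth_append)
      have run: "\<forall>i < length ?w. step N (?cs ! i) (?w ! i) (?cs ! Suc i)"
      proof (intro allI impI)
        fix i assume "i < length ?w"
        then consider "i < ?n" | "i = ?n" by fastforce
        then show "step N (?cs ! i) (?w ! i) (?cs ! Suc i)"
        proof cases
          case 1 then show ?thesis using H(2,4) by (simp add: nth_append)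
        next
          case 2 then show ?thesis using H(2,7) sx by (simp add: nth_append)
        qed
      qed
      have ev: "\<forall>j < ?n. step N (g1_eve_cfg N \<tau> ?w ?cs j) (?w ! j) (g1_eve_cfg N \<tau> ?w ?cs (Suc j))"
        using H(2,5) g1_eve_cfg_snoc[OF H(2)] by (simp add: nth_append)
      have en: "g1_eve_cfg N \<tau> ?w ?cs ?n = e" using H(6) g1_eve_cfg_snoc[OF H(2)] by simp
      have xn: "?cs ! Suc ?n = x'" using H(2) by (simp add: nth_append)
      have wn: "?w ! ?n = a" by simp
      from assms(1)[unfolded g1_winning_def, rule_format, OF conjI[OF w1 conjI[OF l1 conjI[OF c0 run]]], of ?n]
      have "(\<forall>j < ?n. step N (g1_eve_cfg N \<tau> ?w ?cs j) (?w ! j) (g1_eve_cfg N \<tau> ?w ?cs (Suc j))) \<longrightarrow>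
             (\<not> step N (g1_eve_cfg N \<tau> ?w ?cs ?n) (?w ! ?n) (g1_eve_cfg N \<tau> ?w ?cs (Suc ?n))
                  \<longrightarrow> \<not> acc_ext N (?cs ! Suc ?n))
           \<and> (step N (g1_eve_cfg N \<tau> ?w ?cs ?n) (?w ! ?n) (g1_eve_cfg N \<tau> ?w ?cs (Suc ?n))
                \<and> fst (?cs ! Suc ?n) \<in> final N
                  \<longrightarrow> fst (g1_eve_cfg N \<tau> ?w ?cs (Suc ?n)) \<in> final N)" by simp
      then show "(\<not> step N e a e' \<longrightarrow> \<not> acc_ext N x')
           \<and> (step N e a e' \<and> fst x' \<in> final N \<longrightarrow> fst e' \<in> final N)"
        using ev en xn wn E' by simp
      show "step N e a e' \<longrightarrow> g1pos N \<tau> e' x'"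
      proof
        assume st: "step N e a e'"
        have ev2: "\<forall>j < length ?w. step N (g1_eve_cfg N \<tau> ?w ?cs j) (?w ! j) (g1_eve_cfg N \<tau> ?w ?cs (Suc j))"
        proof (intro allI impI)
          fix j assume "j < length ?w"
          then consider "j < ?n" | "j = ?n" by fastforce
          then show "step N (g1_eve_cfg N \<tau> ?w ?cs j) (?w ! j) (g1_eve_cfg N \<tau> ?w ?cs (Suc j))"
          proof cases
            case 1 then show ?thesis using ev by blast
          next
            case 2 then show ?thesis using st en E' by simp
          qed
        qed
        show "g1pos N \<tau> e' x'" unfolding g1pos_def
          using w1 l1 c0 run ev2 E' xn by (intro exI[of _ ?w] exI[of _ ?cs]) simp
      qed
    qed
    show "(\<exists>e'. step N e a e' \<and> (\<forall>x'. step N x a x' \<longrightarrow>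
         (fst x' \<in> final N \<longrightarrow> fst e' \<in> final N) \<and>
           (g1pos N \<tau> e' x' \<or> dmn N e' x')))
      \<or> (\<forall>x'. step N x a x' \<longrightarrow> \<not> acc_ext N x')"
    proof (cases "step N e a e'")
      case True then show ?thesis using G P by blast
    next
      case False then show ?thesis using G by blast
    qed
qed


definition chs :: "('q, 'a) ocn \<Rightarrow> 'q config \<Rightarrow> 'a \<Rightarrow> 'q config" where
  "chs N c a = (SOME e'. step N c a e' \<and> (\<forall>y. step N c a y \<longrightarrow>
       (fst y \<in> final N \<longrightarrow> fst e' \<in> final N) \<and> dmn N e' y))"

fun erun :: "('q, 'a) ocn \<Rightarrow> 'q config \<Rightarrow> 'a list \<Rightarrow> 'q config" where
  "erun N c [] = c"
| "erun N c (a # w) = erun N (chs N c a) w"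

lemma erun_snoc: "erun N c (u @ [a]) = chs N (erun N c u) a"
  by (induction u arbitrary: c) auto

lemma final_acc: "fst y \<in> final N \<Longrightarrow> acc_ext N y"
  unfolding acc_ext_def by (metis reach.reach_Nil)

lemma step_inv:
  assumes wf: "wf_ocn N"
    and re: "reach N c u e"
    and inv: "\<forall>x. reach N c u x \<longrightarrow> dmn N e x \<and> (fst x \<in> final N \<longrightarrow> fst e \<in> final N)"
    and x0: "reach N c u x0" and y0: "step N x0 a y0" "acc_ext N y0" and a: "a \<in> alph N"
  shows "step N e a (chs N e a) \<and> (\<forall>y. reach N c (u @ [a]) y \<longrightarrow>
           dmn N (chs N e a) y \<and> (fst y \<in> final N \<longrightarrow> fst (chs N e a) \<in> final N))"
proof -
  have dx0: "dmn N e x0" using inv x0 by blast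
  from dmn_D[OF dx0 a] y0 obtain ex where ex: "step N e a ex" "dmn N ex y0"
    "fst y0 \<in> final N \<longrightarrow> fst ex \<in> final N" by blast
  have exa: "acc_ext N ex"
    using y0(2) ex(2,3) dmn_alive[OF wf] unfolding acc_ext_def by blast
  have dee: "dmn N e e" using inv re by blast
  from dmn_D[OF dee a] ex(1) exa have
    "\<exists>e'. step N e a e' \<and> (\<forall>y. step N e a y \<longrightarrow>
       (fst y \<in> final N \<longrightarrow> fst e' \<in> final N) \<and> dmn N e' y)" by blast
  then have Q: "step N e a (chs N e a) \<and> (\<forall>y. step N e a y \<longrightarrow>
       (fst y \<in> final N \<longrightarrow> fst (chs N e a) \<in> final N) \<and> dmn N (chs N e a) y)"
    unfolding chs_def by (rule someI_ex)
  have "dmn N (chs N e a) y \<and> (fst y \<in> final N \<longrightarrow> fst (chs N e a) \<in> final N)"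
    if "reach N c (u @ [a]) y" for y
  proof -
    from reach_snoc[THEN iffD1, OF that] obtain x where x: "reach N c u x" "step N x a y" by blast
    have ix: "dmn N e x \<and> (fst x \<in> final N \<longrightarrow> fst e \<in> final N)" using inv x(1) by blast
    from dmn_D[OF conjunct1[OF ix] a] show ?thesis
    proof
      assume "\<exists>e'. step N e a e' \<and> (\<forall>x'. step N x a x' \<longrightarrow>
         (fst x' \<in> final N \<longrightarrow> fst e' \<in> final N) \<and> dmn N e' x')"
      then obtain ex' where ex': "step N e a ex'" "\<forall>x'. step N x a x' \<longrightarrow>
         (fst x' \<in> final N \<longrightarrow> fst ex' \<in> final N) \<and> dmn N ex' x'" by blast
      from ex'(2) x(2) have dy: "dmn N ex' y" and fy: "fst y \<in> final N \<longrightarrow> fst ex' \<in> final N"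
        by blast+
      from conjunct2[OF Q] ex'(1) have d1: "dmn N (chs N e a) ex'"
        and f1: "fst ex' \<in> final N \<longrightarrow> fst (chs N e a) \<in> final N"
        by blast+
      have "dmn N (chs N e a) y" using dmn_trans[OF wf d1 dy] .
      then show ?thesis using f1 fy by blast
    next
      assume "\<forall>x'. step N x a x' \<longrightarrow> \<not> acc_ext N x'"
      then have na: "\<not> acc_ext N y" using x(2) by blast
      have "dmn N (chs N e a) y" using dmn_dead[OF na] .
      moreover have "fst y \<notin> final N" using na final_acc[of y N] by blast
      ultimately show ?thesis by blast
    qed
  qed
  then show ?thesis using conjunct1[OF Q] by blast
qed

lemma inv_lemma:
  assumes wf: "wf_ocn N" and d0: "dmn N (init_config N) (init_config N)"
  shows "u \<in> lists (alph N) \<Longrightarrow> (\<exists>y. reach N (init_config N) u y \<and> acc_ext N y) \<Longrightarrow>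
     reach N (init_config N) u (erun N (init_config N) u)
     \<and> (\<forall>x. reach N (init_config N) u x \<longrightarrow> dmn N (erun N (init_config N) u) x
           \<and> (fst x \<in> final N \<longrightarrow> fst (erun N (init_config N) u) \<in> final N))"
proof (induction u rule: rev_induct)
  case Nil
  then show ?case using d0 by simp
next
  case (snoc a u)
  from snoc.prems(2) obtain y where y: "reach N (init_config N) (u @ [a]) y" "acc_ext N y" by blast
  from reach_snoc[THEN iffD1, OF y(1)] obtain x where x: "reach N (init_config N) u x" "step N x a y" by blast
  have ax: "acc_ext N x" using acc_ext_step[OF x(2) y(2)] .
  have ul: "u \<in> lists (alph N)" using snoc.prems(1) by simp
  have IH: "reach N (init_config N) u (erun N (init_config N) u)
     \<and> (\<forall>x. reach N (init_config N) u x \<longrightarrow> dmn N (erun N (init_config N) u) x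
           \<and> (fst x \<in> final N \<longrightarrow> fst (erun N (init_config N) u) \<in> final N))"
    using snoc.IH[OF ul] x(1) ax by blast
  have a: "a \<in> alph N" using snoc.prems(1) by simp
  from step_inv[OF wf conjunct1[OF IH] conjunct2[OF IH] x(1) x(2) y(2) a]
  have S: "step N (erun N (init_config N) u) a (chs N (erun N (init_config N) u) a) \<and> (\<forall>y. reach N (init_config N) (u @ [a]) y \<longrightarrow>
           dmn N (chs N (erun N (init_config N) u) a) y \<and> (fst y \<in> final N \<longrightarrow> fst (chs N (erun N (init_config N) u) a) \<in> final N))" .
  have R: "reach N (init_config N) (u @ [a]) (chs N (erun N (init_config N) u) a)"
  proof -
    have "\<exists>x. reach N (init_config N) u x \<and> step N x a (chs N (erun N (init_config N) u) a)"
      using conjunct1[OF IH] conjunct1[OF S] by blast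
    then show ?thesis by (rule reach_snoc[THEN iffD2])
  qed
  show ?case unfolding erun_snoc using R conjunct2[OF S] by (rule conjI)
qed

theorem lemma1:
  fixes N :: "('q, 'a) ocn"
  assumes "wf_ocn N"
    and "eve_wins_G1 N"
  shows "eve_wins_letter_game N"
proof -
  note wf = assms(1)
  from assms(2) obtain \<tau> where tau: "g1_winning N \<tau>" unfolding eve_wins_G1_def by blast
  have "g1pos N \<tau> (init_config N) (init_config N)"
    unfolding g1pos_def
    by (intro exI[of _ "[]"] exI[of _ "[init_config N]"]) (simp add: g1_eve_cfg_def)
  then have d0: "dmn N (init_config N) (init_config N)" by (rule g1pos_dmn[OF tau])
  define \<sigma> where "\<sigma> = erun N (init_config N)"
  have lc: "letter_cfg N \<sigma> u = erun N (init_config N) u" for u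
    unfolding letter_cfg_def \<sigma>_def by simp
  have "letter_winning N \<sigma>"
    unfolding letter_winning_def
  proof (intro ballI impI)
    fix w assume w: "w \<in> lists (alph N)" and "\<exists>v. w @ v \<in> lang N"
    then obtain v c where v: "reach N (init_config N) (w @ v) c" "fst c \<in> final N"
      unfolding lang_def by blast
    have pre: "\<exists>y. reach N (init_config N) (take i w) y \<and> acc_ext N y" for i
    proof -
      have "w @ v = take i w @ (drop i w @ v)" by simp
      with v(1) have "reach N (init_config N) (take i w @ (drop i w @ v)) c" by simp
      from reach_app[OF this] obtain m where "reach N (init_config N) (take i w) m" "reach N m (drop i w @ v) c"
        by blast
      then show ?thesis using v(2) unfolding acc_ext_def by blast
    qed
    have tw: "take i w \<in> lists (alph N)" for i using w
      by (meson in_listsD in_listsI in_set_takeD)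
    have I: "reach N (init_config N) (take i w) (erun N (init_config N) (take i w))
     \<and> (\<forall>x. reach N (init_config N) (take i w) x \<longrightarrow> dmn N (erun N (init_config N) (take i w)) x
           \<and> (fst x \<in> final N \<longrightarrow> fst (erun N (init_config N) (take i w)) \<in> final N))" for i
      using inv_lemma[OF wf d0 tw pre] .
    show "(\<forall>i<length w. step N (letter_cfg N \<sigma> (take i w)) (w ! i) (letter_cfg N \<sigma> (take (Suc i) w)))
        \<and> (w \<in> lang N \<longrightarrow> fst (letter_cfg N \<sigma> w) \<in> final N)"
    proof (intro conjI allI impI)
      fix i assume i: "i < length w"
      have ts: "take (Suc i) w = take i w @ [w ! i]" using i by (simp add: take_Suc_conv_app_nth)
      from pre[of "Suc i"] obtain y where y: "reach N (init_config N) (take i w @ [w ! i]) y" "acc_ext N y"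
        unfolding ts by blast
      from reach_snoc[THEN iffD1, OF y(1)] obtain x where x: "reach N (init_config N) (take i w) x" "step N x (w ! i) y"
        by blast
      have a: "w ! i \<in> alph N" using w i by (meson in_listsD nth_mem)
      from step_inv[OF wf conjunct1[OF I] conjunct2[OF I] x(1) x(2) y(2) a]
      show "step N (letter_cfg N \<sigma> (take i w)) (w ! i) (letter_cfg N \<sigma> (take (Suc i) w))"
        unfolding lc ts erun_snoc by (rule conjunct1)
    next
      assume "w \<in> lang N"
      then obtain x where "reach N (init_config N) w x" "fst x \<in> final N"
        unfolding lang_def by blast
      moreover have "take (length w) w = w" by simp
      ultimately show "fst (letter_cfg N \<sigma> w) \<in> final N"
        using I[of "length w"] unfolding lc by metis
    qed
  qed
  then show ?thesis unfolding eve_wins_letter_game_def by blast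
qed

end
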